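(* Let $\mathcal{G}$ be a discrete hypergroup, $X$ a $\mathcal{G}$-boundary and $Y$ a minimal compact $\mathcal{G}$-space. Then every $\mathcal{G}$-equivariant unital completely positive map $\mathrm{C}(X)\to\mathrm{C}(Y)$ is injective. If moreover $\mathrm{C}(X)$ is $\mathcal{G}$-injective, then $\mathrm{C}(X)$ is $\mathcal{G}$-rigid.
   Context: A discrete hypergroup is a discrete set $\mathcal{G}$ with unit $e$, an involution $g\mapsto\overline{g}$ and an associative convolution product $*$ on probability measures on $\mathcal{G}$ (points identified with point masses) such that $g*e=e*g=g$, $\overline{\overline{g}}=g$, $\overline{g*h}=\overline{h}*\overline{g}$, $e\in\mathrm{supp}(g*h)$ iff $h=\overline{g}$, and $\mathrm{supp}(\mu*\nu)$ is finite for finitely supported $\mu,\nu$. A $\mathcal{G}$-operator system is an operator system $S$ with unital completely positive (ucp) maps $\alpha_g$ ($g\in\mathcal{G}$), written $gx=\alpha_g(x)$, such that $\alpha_e=\mathrm{id}_S$ and $\alpha_g\circ\alpha_h=\int\alpha_k\,d(\delta_g*\delta_h)(k)$; a map $\varphi$ is $\mathcal{G}$-equivariant if $\varphi(gx)=g\varphi(x)$. A $\mathcal{G}$-action on a compact space $Z$ is a $\mathcal{G}$-operator system structure on $\mathrm{C}(Z)$; $\mathcal{G}$ then acts on $\mathcal{P}(Z)$ by the dual maps. $Z$ is minimal if $\overline{\mathrm{conv}}(\mathcal{G}\delta_z)=\mathcal{P}(Z)$ for every $z\in Z$; strongly proximal if for every $\mu\in\mathcal{P}(Z)$ the closure $\overline{\mathcal{G}\mu}$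 contains a point mass; a $\mathcal{G}$-boundary if both. $\mathrm{C}(X)$ is $\mathcal{G}$-injective if for all $\mathcal{G}$-operator systems $S\subseteq R$ every $\mathcal{G}$-equivariant ucp map $S\to\mathrm{C}(X)$ extends to a $\mathcal{G}$-equivariant ucp map $R\to\mathrm{C}(X)$. $\mathrm{C}(X)$ is $\mathcal{G}$-rigid if every $\mathcal{G}$-equivariant ucp map $\mathrm{C}(X)\to\mathrm{C}(X)$ is the identity map. *)

theory Defs
  imports "HOL-Analysis.Analysis" "HOL-Probability.Probability_Mass_Function"
          "HOL-Library.Function_Algebras"
begin

text \<open>A discrete hypergroup on the type 'g: the convolution of point masses
  delta_g * delta_h is the probability measure conv g h (a pmf); the convolution
  of general probability measures is its (bi)linear extension, i.e. bind_pmf.\<close>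

definition hypergroup :: "('g \<Rightarrow> 'g \<Rightarrow> 'g pmf) \<Rightarrow> 'g \<Rightarrow> ('g \<Rightarrow> 'g) \<Rightarrow> bool" where
  "hypergroup cv e iv \<longleftrightarrow>
     (\<forall>g. cv g e = return_pmf g \<and> cv e g = return_pmf g) \<and>
     (\<forall>g. iv (iv g) = g) \<and>
     (\<forall>g h. map_pmf iv (cv g h) = cv (iv h) (iv g)) \<and>
     (\<forall>g h. e \<in> set_pmf (cv g h) \<longleftrightarrow> h = iv g) \<and>
     (\<forall>g h. finite (set_pmf (cv g h))) \<and>
     (\<forall>g h l. bind_pmf (cv g h) (\<lambda>k. cv k l) = bind_pmf (cv h l) (\<lambda>k. cv g k))"

text \<open>Addition/zero come from the type class ab_group_add; complex scalar
  multiplication, involution, unit and the matrix cones are part of the record.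
  An n x n matrix over the system is a function nat => nat => 'r of which only the
  entries with indices < n are relevant.\<close>

record 'r opsys =
  os_carrier :: "'r set"
  os_smult :: "complex \<Rightarrow> 'r \<Rightarrow> 'r"
  os_star :: "'r \<Rightarrow> 'r"
  os_unit :: "'r"
  os_pos :: "nat \<Rightarrow> (nat \<Rightarrow> nat \<Rightarrow> 'r) \<Rightarrow> bool"

definition mat_in :: "'r set \<Rightarrow> nat \<Rightarrow> (nat \<Rightarrow> nat \<Rightarrow> 'r) \<Rightarrow> bool" where
  "mat_in V n A \<longleftrightarrow> (\<forall>i<n. \<forall>j<n. A i j \<in> V)"

definition os_scalar_id :: "('r::ab_group_add) opsys \<Rightarrow> real \<Rightarrow> nat \<Rightarrow> nat \<Rightarrow> 'r" where
  "os_scalar_id R r = (\<lambda>i j. if i = j then os_smult R (complex_of_real r) (os_unit R) else 0)"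

text \<open>alpha^* A alpha for a complex m x n matrix alpha and an m x m matrix A.\<close>
definition os_congr :: "('r::ab_group_add) opsys \<Rightarrow> nat \<Rightarrow> (nat \<Rightarrow> nat \<Rightarrow> complex)
     \<Rightarrow> (nat \<Rightarrow> nat \<Rightarrow> 'r) \<Rightarrow> nat \<Rightarrow> nat \<Rightarrow> 'r" where
  "os_congr R m \<alpha> A = (\<lambda>k l. \<Sum>i<m. \<Sum>j<m. os_smult R (cnj (\<alpha> i k) * \<alpha> j l) (A i j))"

definition operator_system :: "('r::ab_group_add) opsys \<Rightarrow> bool" where
  "operator_system R \<longleftrightarrow>
    (let V = os_carrier R; sm = os_smult R; st = os_star R; u = os_unit R; P = os_pos R in
     0 \<in> V \<and> (\<forall>x\<in>V. \<forall>y\<in>V. x + y \<in> V) \<and> (\<forall>a. \<forall>x\<in>V. sm a x \<in> V) \<and>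
     (\<forall>x\<in>V. sm 1 x = x) \<and>
     (\<forall>a b. \<forall>x\<in>V. sm a (sm b x) = sm (a * b) x) \<and>
     (\<forall>a b. \<forall>x\<in>V. sm (a + b) x = sm a x + sm b x) \<and>
     (\<forall>a. \<forall>x\<in>V. \<forall>y\<in>V. sm a (x + y) = sm a x + sm a y) \<and>
     (\<forall>x\<in>V. st x \<in> V \<and> st (st x) = x) \<and>
     (\<forall>x\<in>V. \<forall>y\<in>V. st (x + y) = st x + st y) \<and>
     (\<forall>a. \<forall>x\<in>V. st (sm a x) = sm (cnj a) (st x)) \<and>
     u \<in> V \<and> st u = u \<and>
     (\<forall>n A B. (\<forall>i<n. \<forall>j<n. A i j = B i j) \<longrightarrow> P n A = P n B) \<and>
     (\<forall>n A. P n A \<longrightarrow> mat_in V n A \<and> (\<forall>i<n. \<forall>j<n. st (A i j) = A j i)) \<and>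
     (\<forall>n A B. P n A \<and> P n B \<longrightarrow> P n (\<lambda>i j. A i j + B i j)) \<and>
     (\<forall>n A r. P n A \<and> r \<ge> 0 \<longrightarrow> P n (\<lambda>i j. sm (complex_of_real r) (A i j))) \<and>
     (\<forall>n A. P n A \<and> P n (\<lambda>i j. - A i j) \<longrightarrow> (\<forall>i<n. \<forall>j<n. A i j = 0)) \<and>
     (\<forall>m n \<alpha> A. P m A \<longrightarrow> P n (os_congr R m \<alpha> A)) \<and>
     (\<forall>n A. mat_in V n A \<and> (\<forall>i<n. \<forall>j<n. st (A i j) = A j i) \<longrightarrow>
        (\<exists>r>0. P n (\<lambda>i j. A i j + os_scalar_id R r i j)) \<and>
        ((\<forall>r>0. P n (\<lambda>i j. A i j + os_scalar_id R r i j)) \<longrightarrow> P n A)))"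

definition ucp :: "('a::ab_group_add) opsys \<Rightarrow> ('b::ab_group_add) opsys \<Rightarrow> ('a \<Rightarrow> 'b) \<Rightarrow> bool" where
  "ucp R1 R2 \<phi> \<longleftrightarrow>
     (\<forall>x\<in>os_carrier R1. \<phi> x \<in> os_carrier R2) \<and>
     (\<forall>x\<in>os_carrier R1. \<forall>y\<in>os_carrier R1. \<phi> (x + y) = \<phi> x + \<phi> y) \<and>
     (\<forall>a. \<forall>x\<in>os_carrier R1. \<phi> (os_smult R1 a x) = os_smult R2 a (\<phi> x)) \<and>
     \<phi> (os_unit R1) = os_unit R2 \<and>
     (\<forall>n A. os_pos R1 n A \<longrightarrow> os_pos R2 n (\<lambda>i j. \<phi> (A i j)))"

definition os_restrict :: "'r opsys \<Rightarrow> 'r set \<Rightarrow> 'r opsys" where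
  "os_restrict R S = R\<lparr>os_carrier := S, os_pos := (\<lambda>n A. os_pos R n A \<and> mat_in S n A)\<rparr>"

definition G_opsys :: "('g \<Rightarrow> 'g \<Rightarrow> 'g pmf) \<Rightarrow> 'g \<Rightarrow> ('r::ab_group_add) opsys
     \<Rightarrow> ('g \<Rightarrow> 'r \<Rightarrow> 'r) \<Rightarrow> bool" where
  "G_opsys cv e R \<alpha> \<longleftrightarrow>
     operator_system R \<and> (\<forall>g. ucp R R (\<alpha> g)) \<and>
     (\<forall>x\<in>os_carrier R. \<alpha> e x = x) \<and>
     (\<forall>g h. \<forall>x\<in>os_carrier R. \<alpha> g (\<alpha> h x) =
        (\<Sum>k\<in>set_pmf (cv g h). os_smult R (complex_of_real (pmf (cv g h) k)) (\<alpha> k x)))"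

definition G_equivariant :: "('a::ab_group_add) opsys \<Rightarrow> ('g \<Rightarrow> 'a \<Rightarrow> 'a)
     \<Rightarrow> ('g \<Rightarrow> 'b \<Rightarrow> 'b) \<Rightarrow> ('a \<Rightarrow> 'b) \<Rightarrow> bool" where
  "G_equivariant R1 \<alpha>1 \<alpha>2 \<phi> \<longleftrightarrow> (\<forall>g. \<forall>x\<in>os_carrier R1. \<phi> (\<alpha>1 g x) = \<alpha>2 g (\<phi> x))"

definition psd_mat :: "nat \<Rightarrow> (nat \<Rightarrow> nat \<Rightarrow> complex) \<Rightarrow> bool" where
  "psd_mat n M \<longleftrightarrow> (\<forall>v. (\<Sum>i<n. \<Sum>j<n. cnj (v i) * M i j * v j) \<in> \<real> \<and>
                         Re (\<Sum>i<n. \<Sum>j<n. cnj (v i) * M i j * v j) \<ge> 0)"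

definition CZ :: "('z::topological_space \<Rightarrow> complex) opsys" where
  "CZ = \<lparr>os_carrier = {f. continuous_on UNIV f},
         os_smult = (\<lambda>c f z. c * f z),
         os_star = (\<lambda>f z. cnj (f z)),
         os_unit = (\<lambda>z. 1),
         os_pos = (\<lambda>n F. (\<forall>i<n. \<forall>j<n. continuous_on UNIV (F i j)) \<and>
                         (\<forall>z. psd_mat n (\<lambda>i j. F i j z)))\<rparr>"

text \<open>A G-action on a compact (Hausdorff) space Z = a G-operator system structure on C(Z).\<close>
definition G_space :: "('g \<Rightarrow> 'g \<Rightarrow> 'g pmf) \<Rightarrow> 'g
     \<Rightarrow> ('g \<Rightarrow> ('z::topological_space \<Rightarrow> complex) \<Rightarrow> ('z \<Rightarrow> complex)) \<Rightarrow> bool" where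
  "G_space cv e \<alpha> \<longleftrightarrow> G_opsys cv e CZ \<alpha>"

section \<open>Probability measures on Z, represented as states on C(Z) (Riesz)\<close>

definition is_state :: "(('z::topological_space \<Rightarrow> complex) \<Rightarrow> complex) \<Rightarrow> bool" where
  "is_state \<mu> \<longleftrightarrow>
     (\<forall>f\<in>os_carrier (CZ::('z \<Rightarrow> complex) opsys). \<forall>h\<in>os_carrier (CZ::('z \<Rightarrow> complex) opsys).
         \<mu> (f + h) = \<mu> f + \<mu> h) \<and>
     (\<forall>c. \<forall>f\<in>os_carrier (CZ::('z \<Rightarrow> complex) opsys). \<mu> (\<lambda>z. c * f z) = c * \<mu> f) \<and>
     (\<forall>f\<in>os_carrier (CZ::('z \<Rightarrow> complex) opsys).
         (\<forall>z. Im (f z) = 0 \<and> Re (f z) \<ge> 0) \<longrightarrow> Im (\<mu> f) = 0 \<and> Re (\<mu> f) \<ge> 0) \<and>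
     \<mu> (\<lambda>z. 1) = 1"

definition point_mass :: "'z \<Rightarrow> ('z \<Rightarrow> complex) \<Rightarrow> complex" where
  "point_mass z = (\<lambda>f. f z)"

definition dual_act :: "('g \<Rightarrow> ('z \<Rightarrow> complex) \<Rightarrow> ('z \<Rightarrow> complex)) \<Rightarrow> 'g
     \<Rightarrow> (('z \<Rightarrow> complex) \<Rightarrow> complex) \<Rightarrow> ('z \<Rightarrow> complex) \<Rightarrow> complex" where
  "dual_act \<alpha> g \<mu> = (\<lambda>f. \<mu> (\<alpha> g f))"

definition wstar_closure :: "((('z::topological_space) \<Rightarrow> complex) \<Rightarrow> complex) set
     \<Rightarrow> (('z \<Rightarrow> complex) \<Rightarrow> complex) set" where
  "wstar_closure A = {\<psi>. \<forall>\<epsilon>>0. \<forall>F. finite F \<and> F \<subseteq> os_carrier (CZ::('z \<Rightarrow> complex) opsys) \<longrightarrow>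
        (\<exists>\<phi>\<in>A. \<forall>f\<in>F. cmod (\<phi> f - \<psi> f) < \<epsilon>)}"

definition conv_hull_fun :: "(('z \<Rightarrow> complex) \<Rightarrow> complex) set \<Rightarrow> (('z \<Rightarrow> complex) \<Rightarrow> complex) set" where
  "conv_hull_fun A = {\<psi>. \<exists>(n::nat) t \<phi>. (\<forall>i<n. \<phi> i \<in> A \<and> t i \<ge> (0::real)) \<and> (\<Sum>i<n. t i) = 1 \<and>
        \<psi> = (\<lambda>f. \<Sum>i<n. complex_of_real (t i) * \<phi> i f)}"

definition G_minimal :: "('g \<Rightarrow> ('z::topological_space \<Rightarrow> complex) \<Rightarrow> ('z \<Rightarrow> complex)) \<Rightarrow> bool" where
  "G_minimal \<alpha> \<longleftrightarrow> (\<forall>z. \<forall>\<mu>. is_state \<mu> \<longrightarrow>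
       \<mu> \<in> wstar_closure (conv_hull_fun {dual_act \<alpha> g (point_mass z) | g. True}))"

definition G_strongly_proximal :: "('g \<Rightarrow> ('z::topological_space \<Rightarrow> complex) \<Rightarrow> ('z \<Rightarrow> complex)) \<Rightarrow> bool" where
  "G_strongly_proximal \<alpha> \<longleftrightarrow> (\<forall>\<mu>. is_state \<mu> \<longrightarrow>
       (\<exists>z. point_mass z \<in> wstar_closure {dual_act \<alpha> g \<mu> | g. True}))"

definition G_boundary :: "('g \<Rightarrow> ('z::topological_space \<Rightarrow> complex) \<Rightarrow> ('z \<Rightarrow> complex)) \<Rightarrow> bool" where
  "G_boundary \<alpha> \<longleftrightarrow> G_minimal \<alpha> \<and> G_strongly_proximal \<alpha>"

text \<open>G-injectivity relative to all G-operator systems R whose elements live in the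
  type 'r.\<close>
definition G_injective :: "('g \<Rightarrow> 'g \<Rightarrow> 'g pmf) \<Rightarrow> 'g
     \<Rightarrow> ('g \<Rightarrow> ('x::topological_space \<Rightarrow> complex) \<Rightarrow> ('x \<Rightarrow> complex)) \<Rightarrow> ('r::ab_group_add) itself \<Rightarrow> bool" where
  "G_injective cv e \<alpha> _ \<longleftrightarrow>
     (\<forall>(R::'r opsys) \<beta> S (\<phi>::'r \<Rightarrow> ('x \<Rightarrow> complex)).
        G_opsys cv e R \<beta> \<and> S \<subseteq> os_carrier R \<and> G_opsys cv e (os_restrict R S) \<beta> \<and>
        ucp (os_restrict R S) CZ \<phi> \<and> G_equivariant (os_restrict R S) \<beta> \<alpha> \<phi> \<longrightarrow>
        (\<exists>\<psi>. ucp R CZ \<psi> \<and> G_equivariant R \<beta> \<alpha> \<psi> \<and> (\<forall>x\<in>S. \<psi> x = \<phi> x)))"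

definition G_rigid :: "('g \<Rightarrow> ('x::topological_space \<Rightarrow> complex) \<Rightarrow> ('x \<Rightarrow> complex)) \<Rightarrow> bool" where
  "G_rigid \<alpha> \<longleftrightarrow>
     (\<forall>\<phi>. ucp CZ CZ \<phi> \<and> G_equivariant CZ \<alpha> \<alpha> \<phi> \<longrightarrow>
        (\<forall>f\<in>os_carrier (CZ::('x \<Rightarrow> complex) opsys). \<phi> f = f))"

end

theory Submission
  imports Defs
begin

lemma CZ_simps:
  "os_carrier (CZ::('a::topological_space\<Rightarrow>complex) opsys) = {f. continuous_on UNIV f}"
  "os_smult (CZ::('a::topological_space\<Rightarrow>complex) opsys) = (\<lambda>c f z. c * f z)"
  "os_unit (CZ::('a::topological_space\<Rightarrow>complex) opsys) = (\<lambda>z. 1)"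
  "os_pos (CZ::('a::topological_space\<Rightarrow>complex) opsys) = (\<lambda>n F. (\<forall>i<n. \<forall>j<n. continuous_on UNIV (F i j)) \<and>
                         (\<forall>z. psd_mat n (\<lambda>i j. F i j z)))"
  by (simp_all add: CZ_def)

lemma ucpD:
  assumes "ucp (CZ::('a::topological_space\<Rightarrow>complex) opsys) (CZ::('b::topological_space\<Rightarrow>complex) opsys) \<psi>"
  shows ucp_cont: "continuous_on UNIV f \<Longrightarrow> continuous_on UNIV (\<psi> f)"
   and ucp_add: "continuous_on UNIV f \<Longrightarrow> continuous_on UNIV h \<Longrightarrow> \<psi> (f + h) = \<psi> f + \<psi> h"
   and ucp_smult: "continuous_on UNIV f \<Longrightarrow> \<psi> (\<lambda>z. c * f z) = (\<lambda>z. c * \<psi> f z)"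
   and ucp_unit: "\<psi> (\<lambda>z. 1) = (\<lambda>z. 1)"
   and ucp_pos: "os_pos (CZ::('a\<Rightarrow>complex) opsys) n A \<Longrightarrow> os_pos (CZ::('b\<Rightarrow>complex) opsys) n (\<lambda>i j. \<psi> (A i j))"
  using assms unfolding ucp_def CZ_simps by auto

lemma ucp_diff:
  assumes "ucp (CZ::('a::topological_space\<Rightarrow>complex) opsys) (CZ::('b::topological_space\<Rightarrow>complex) opsys) \<psi>"
    "continuous_on UNIV f" "continuous_on UNIV h"
  shows "\<psi> (f - h) = \<psi> f - \<psi> h"
proof -
  have c: "continuous_on UNIV (\<lambda>z. (-1) * h z)" using assms(3) by (intro continuous_intros)
  have eq: "f - h = f + (\<lambda>z. (-1) * h z)" by (auto simp: fun_diff_def)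
  have "\<psi> (f - h) = \<psi> (f + (\<lambda>z. (-1) * h z))" using eq by (rule arg_cong)
  also have "\<dots> = \<psi> f + \<psi> (\<lambda>z. (-1) * h z)" by (rule ucp_add[OF assms(1) assms(2) c])
  also have "\<dots> = \<psi> f + (\<lambda>z. (-1) * \<psi> h z)" by (subst ucp_smult[OF assms(1) assms(3)]) (rule refl)
  also have "\<dots> = \<psi> f - \<psi> h" by (auto simp: fun_diff_def)
  finally show ?thesis .
qed

lemma ucp_const:
  assumes "ucp (CZ::('a::topological_space\<Rightarrow>complex) opsys) (CZ::('b::topological_space\<Rightarrow>complex) opsys) \<psi>"
  shows "\<psi> (\<lambda>z. c) = (\<lambda>z. c)"
  using ucp_smult[OF assms, of "\<lambda>z. 1" c] ucp_unit[OF assms] by simp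

lemma ucp_zero:
  assumes "ucp (CZ::('a::topological_space\<Rightarrow>complex) opsys) (CZ::('b::topological_space\<Rightarrow>complex) opsys) \<psi>"
  shows "\<psi> 0 = 0"
  using ucp_const[OF assms, of 0] by (simp add: zero_fun_def)

lemma psd1: "psd_mat (Suc 0) (\<lambda>i j. a) \<longleftrightarrow> a \<in> \<real> \<and> Re a \<ge> 0"
proof
  assume "psd_mat (Suc 0) (\<lambda>i j. a)"
  from this[unfolded psd_mat_def, rule_format, of "\<lambda>_. 1"] show "a \<in> \<real> \<and> Re a \<ge> 0" by simp
next
  assume a: "a \<in> \<real> \<and> Re a \<ge> 0"
  then obtain r where r: "a = of_real r" "r \<ge> 0" by (auto elim!: Reals_cases)
  show "psd_mat (Suc 0) (\<lambda>i j. a)" unfolding psd_mat_def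
  proof
    fix v :: "nat \<Rightarrow> complex"
    have "cnj (v 0) * a * v 0 = a * (v 0 * cnj (v 0))" by (simp add: mult_ac)
    also have "\<dots> = of_real (r * ((Re (v 0))\<^sup>2 + (Im (v 0))\<^sup>2))"
      using r by (simp only: complex_mult_cnj of_real_mult)
    finally have eq: "cnj (v 0) * a * v 0 = of_real (r * ((Re (v 0))\<^sup>2 + (Im (v 0))\<^sup>2))" .
    have s: "(\<Sum>i<Suc 0. \<Sum>j<Suc 0. cnj (v i) * a * v j) = cnj (v 0) * a * v 0" by simp
    thus "(\<Sum>i<Suc 0. \<Sum>j<Suc 0. cnj (v i) * a * v j) \<in> \<real> \<and> 0 \<le> Re (\<Sum>i<Suc 0. \<Sum>j<Suc 0. cnj (v i) * a * v j)"
      unfolding s eq using r by simp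
  qed
qed

lemma ucp_posit:
  assumes "ucp (CZ::('a::topological_space\<Rightarrow>complex) opsys) (CZ::('b::topological_space\<Rightarrow>complex) opsys) \<psi>"
    "continuous_on UNIV a" "\<forall>z. Im (a z) = 0 \<and> Re (a z) \<ge> 0"
  shows "Im (\<psi> a w) = 0 \<and> Re (\<psi> a w) \<ge> 0"
proof -
  have "os_pos (CZ::('a\<Rightarrow>complex) opsys) (Suc 0) (\<lambda>i j. a)"
    using assms(2,3) by (auto simp: CZ_simps psd1 complex_is_Real_iff)
  from ucp_pos[OF assms(1) this] have "psd_mat (Suc 0) (\<lambda>i j. \<psi> a w)" by (simp add: CZ_simps)
  thus ?thesis by (simp add: psd1 complex_is_Real_iff)
qed

lemma ucp_bound:
  assumes u: "ucp (CZ::('a::topological_space\<Rightarrow>complex) opsys) (CZ::('b::topological_space\<Rightarrow>complex) opsys) \<psi>"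
    and a: "continuous_on UNIV a" "\<forall>z. Im (a z) = 0 \<and> \<bar>Re (a z)\<bar> \<le> M"
  shows "Im (\<psi> a w) = 0 \<and> \<bar>Re (\<psi> a w)\<bar> \<le> M"
proof -
  have cM: "continuous_on UNIV (\<lambda>z::'a. complex_of_real M)" by simp
  have p1: "Im (\<psi> ((\<lambda>z. complex_of_real M) - a) w) = 0 \<and> Re (\<psi> ((\<lambda>z. complex_of_real M) - a) w) \<ge> 0"
    apply (rule ucp_posit[OF u])
     apply (unfold fun_diff_def plus_fun_def, intro continuous_intros a(1))
    apply (intro allI)
    subgoal for z using a(2)[rule_format, of z] by (simp add: abs_le_iff)
    done
  have p2: "Im (\<psi> ((\<lambda>z. complex_of_real M) + a) w) = 0 \<and> Re (\<psi> ((\<lambda>z. complex_of_real M) + a) w) \<ge> 0"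
    apply (rule ucp_posit[OF u])
     apply (unfold fun_diff_def plus_fun_def, intro continuous_intros a(1))
    apply (intro allI)
    subgoal for z using a(2)[rule_format, of z] by (simp add: abs_le_iff)
    done
  have e1: "\<psi> ((\<lambda>z. complex_of_real M) - a) = (\<lambda>z. complex_of_real M) - \<psi> a"
    using ucp_diff[OF u cM a(1)] ucp_const[OF u] by simp
  have e2: "\<psi> ((\<lambda>z. complex_of_real M) + a) = (\<lambda>z. complex_of_real M) + \<psi> a"
    using ucp_add[OF u cM a(1)] ucp_const[OF u] by simp
  show ?thesis using p1 p2 unfolding e1 e2 by (auto simp: abs_le_iff)
qed

lemma ucp_funpow:
  assumes "ucp R R \<psi>" shows "ucp R R (\<psi> ^^ n)"
  using assms by (induction n) (auto simp: ucp_def)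



lemma is_state_point_mass: "is_state (point_mass z)"
  by (simp add: is_state_def point_mass_def)

lemma G_space_ucp: "G_space cv e \<alpha> \<Longrightarrow> ucp CZ CZ (\<alpha> g)"
  by (simp add: G_space_def G_opsys_def)

lemma boundary_zero:
  fixes \<alpha> :: "'g \<Rightarrow> ('x::t2_space \<Rightarrow> complex) \<Rightarrow> ('x \<Rightarrow> complex)"
  assumes sp: "G_space cv e \<alpha>" and bd: "G_boundary \<alpha>" and D: "continuous_on UNIV D"
  and approx: "\<And>\<epsilon>. \<epsilon> > 0 \<Longrightarrow> \<exists>\<mu>. is_state \<mu> \<and> (\<forall>g g'. cmod (\<mu> (\<alpha> g (\<alpha> g' D))) \<le> \<epsilon>)"
  shows "D z0 = 0"
proof (rule ccontr)
  assume nz: "D z0 \<noteq> 0"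
  define \<epsilon> where "\<epsilon> = cmod (D z0) / 4"
  have \<epsilon>: "\<epsilon> > 0" using nz by (simp add: \<epsilon>_def)
  have ac: "\<And>g h. continuous_on UNIV h \<Longrightarrow> continuous_on UNIV (\<alpha> g h)"
    using ucp_cont[OF G_space_ucp[OF sp]] by blast
  obtain \<mu> where st: "is_state \<mu>" and sm: "\<forall>g g'. cmod (\<mu> (\<alpha> g (\<alpha> g' D))) \<le> \<epsilon>"
    using approx[OF \<epsilon>] by blast
  obtain x where x: "point_mass x \<in> wstar_closure {dual_act \<alpha> g \<mu> | g. True}"
    using bd st by (auto simp: G_boundary_def G_strongly_proximal_def)
  have small: "cmod (\<alpha> g' D x) < 2 * \<epsilon>" for g'
  proof -
    have cg: "continuous_on UNIV (\<alpha> g' D)" using ac[OF D] .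
    from x[unfolded wstar_closure_def, simplified, rule_format, OF \<epsilon>, of "{\<alpha> g' D}"] cg
    obtain g where g: "cmod (\<mu> (\<alpha> g (\<alpha> g' D)) - \<alpha> g' D x) < \<epsilon>"
      by (auto simp: CZ_simps dual_act_def point_mass_def)
    have "cmod (\<alpha> g' D x) \<le> cmod (\<mu> (\<alpha> g (\<alpha> g' D))) + cmod (\<mu> (\<alpha> g (\<alpha> g' D)) - \<alpha> g' D x)"
      by (metis add_diff_cancel_left' diff_add_cancel norm_triangle_ineq4)
    thus ?thesis using g sm by (smt (verit))
  qed
  have "point_mass z0 \<in> wstar_closure (conv_hull_fun {dual_act \<alpha> g (point_mass x) | g. True})"
    using bd is_state_point_mass by (auto simp: G_boundary_def G_minimal_def)
  from this[unfolded wstar_closure_def, simplified, rule_format, OF \<epsilon>, of "{D}"] D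
  obtain \<psi> where \<psi>: "\<psi> \<in> conv_hull_fun {dual_act \<alpha> g (point_mass x) | g. True}"
    and close: "cmod (\<psi> D - D z0) < \<epsilon>"
    by (auto simp: CZ_simps point_mass_def)
  from \<psi> have "\<exists>(n::nat) t \<phi>. (\<forall>i<n. (\<exists>g. \<phi> i = dual_act \<alpha> g (point_mass x)) \<and> t i \<ge> (0::real)) \<and> (\<Sum>i<n. t i) = 1 \<and> \<psi> = (\<lambda>f. \<Sum>i<n. complex_of_real (t i) * \<phi> i f)"
    unfolding conv_hull_fun_def by auto
  then obtain n :: nat and t \<phi> where ph: "\<forall>i<n. (\<exists>g. \<phi> i = dual_act \<alpha> g (point_mass x)) \<and> t i \<ge> (0::real)"
    and t1: "(\<Sum>i<n. t i) = 1" and psi: "\<psi> = (\<lambda>f. \<Sum>i<n. complex_of_real (t i) * \<phi> i f)"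
    by blast
  have "cmod (\<psi> D) \<le> (\<Sum>i<n. cmod (complex_of_real (t i) * \<phi> i D))"
    unfolding psi by (rule norm_sum)
  also have "\<dots> \<le> (\<Sum>i<n. t i * (2 * \<epsilon>))"
  proof (rule sum_mono)
    fix i assume "i \<in> {..<n}"
    with ph obtain g where "\<phi> i = dual_act \<alpha> g (point_mass x)" and ti: "t i \<ge> 0" by auto
    hence "\<phi> i D = \<alpha> g D x" by (simp add: dual_act_def point_mass_def)
    thus "cmod (complex_of_real (t i) * \<phi> i D) \<le> t i * (2 * \<epsilon>)"
      using small[of g] ti by (simp add: norm_mult mult_left_mono)
  qed
  also have "\<dots> = 2 * \<epsilon>" using t1 by (simp add: sum_distrib_right[symmetric])
  finally have "cmod (\<psi> D) \<le> 2 * \<epsilon>" .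
  moreover have "cmod (D z0) \<le> cmod (\<psi> D) + cmod (\<psi> D - D z0)"
    by (metis add_diff_cancel_left' diff_add_cancel norm_triangle_ineq4)
  ultimately have "cmod (D z0) < 3 * \<epsilon>" using close by linarith
  thus False using nz by (simp add: \<epsilon>_def)
qed



lemma state_of_ucp:
  assumes u: "ucp (CZ::('a::topological_space\<Rightarrow>complex) opsys) (CZ::('b::topological_space\<Rightarrow>complex) opsys) \<psi>"
  shows "is_state (\<lambda>k. \<psi> k y)"
  unfolding is_state_def
  using ucp_add[OF u] ucp_smult[OF u] ucp_unit[OF u] ucp_posit[OF u] by (auto simp: CZ_simps)

lemma cesaro_state:
  assumes u: "ucp (CZ::('a::topological_space\<Rightarrow>complex) opsys) (CZ::('a\<Rightarrow>complex) opsys) \<phi>" and n: "n > 0"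
  shows "is_state (\<lambda>k. (\<Sum>i<n. (\<phi>^^i) k y) / of_nat n)"
proof -
  have ui: "\<And>i. ucp (CZ::('a\<Rightarrow>complex) opsys) CZ (\<phi>^^i)" using ucp_funpow[OF u] .
  have A: "(\<Sum>i<n. (\<phi>^^i) (f + h) y) / of_nat n = (\<Sum>i<n. (\<phi>^^i) f y) / of_nat n + (\<Sum>i<n. (\<phi>^^i) h y) / of_nat n"
    if "continuous_on UNIV f" "continuous_on UNIV h" for f h :: "'a \<Rightarrow> complex"
    using that ucp_add[OF ui] by (simp add: sum.distrib add_divide_distrib)
  have B: "(\<Sum>i<n. (\<phi>^^i) (\<lambda>z. c * f z) y) / of_nat n = c * ((\<Sum>i<n. (\<phi>^^i) f y) / of_nat n)"
    if "continuous_on UNIV f" for c and f :: "'a \<Rightarrow> complex"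
    using that ucp_smult[OF ui] by (simp add: sum_distrib_left)
  have C: "Im ((\<Sum>i<n. (\<phi>^^i) f y) / of_nat n) = 0 \<and> 0 \<le> Re ((\<Sum>i<n. (\<phi>^^i) f y) / of_nat n)"
    if c: "continuous_on UNIV f" and p: "\<forall>z. Im (f z) = 0 \<and> 0 \<le> Re (f z)" for f :: "'a \<Rightarrow> complex"
  proof -
    have "\<And>i. Im ((\<phi>^^i) f y) = 0 \<and> 0 \<le> Re ((\<phi>^^i) f y)" using ucp_posit[OF ui c p] by blast
    hence "Im (\<Sum>i<n. (\<phi>^^i) f y) = 0 \<and> 0 \<le> Re (\<Sum>i<n. (\<phi>^^i) f y)"
      by (simp add: Im_sum Re_sum sum_nonneg)
    thus ?thesis by (simp add: Im_divide Re_divide)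
  qed
  have D: "(\<Sum>i<n. (\<phi>^^i) (\<lambda>z. 1) y) / of_nat n = 1"
    using ucp_unit[OF ui] n by simp
  show ?thesis unfolding is_state_def CZ_simps
    using A B C D by auto
qed

lemma cesaro_tele:
  assumes u: "ucp (CZ::('a::topological_space\<Rightarrow>complex) opsys) (CZ::('a\<Rightarrow>complex) opsys) \<phi>" and a: "continuous_on UNIV a"
  shows "(\<Sum>i<n. (\<phi>^^i) (\<phi> a - a) y) = (\<phi>^^n) a y - a y"
proof -
  have ui: "\<And>i. ucp (CZ::('a\<Rightarrow>complex) opsys) CZ (\<phi>^^i)" using ucp_funpow[OF u] .
  have "(\<phi>^^i) (\<phi> a - a) y = (\<phi>^^Suc i) a y - (\<phi>^^i) a y" for i
    using ucp_diff[OF ui ucp_cont[OF u a] a] by (simp add: funpow_swap1)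
  hence "(\<Sum>i<n. (\<phi>^^i) (\<phi> a - a) y) = (\<Sum>i<n. (\<phi>^^Suc i) a y - (\<phi>^^i) a y)" by simp
  also have "\<dots> = (\<phi>^^n) a y - a y" by (subst sum_lessThan_telescope) simp
  finally show ?thesis .
qed



lemma part1:
  fixes \<alpha>X :: "'g \<Rightarrow> ('x::t2_space \<Rightarrow> complex) \<Rightarrow> ('x \<Rightarrow> complex)"
    and \<alpha>Y :: "'g \<Rightarrow> ('y::t2_space \<Rightarrow> complex) \<Rightarrow> ('y \<Rightarrow> complex)"
  assumes spX: "G_space cv e \<alpha>X" and spY: "G_space cv e \<alpha>Y" and bd: "G_boundary \<alpha>X"
    and u: "ucp (CZ :: ('x \<Rightarrow> complex) opsys) (CZ :: ('y \<Rightarrow> complex) opsys) \<phi>"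
    and eq: "G_equivariant (CZ :: ('x \<Rightarrow> complex) opsys) \<alpha>X \<alpha>Y \<phi>"
  shows "inj_on \<phi> (os_carrier (CZ :: ('x \<Rightarrow> complex) opsys))"
proof (rule inj_onI)
  fix f h :: "'x \<Rightarrow> complex"
  assume "f \<in> os_carrier CZ" "h \<in> os_carrier CZ" and fh: "\<phi> f = \<phi> h"
  hence cf: "continuous_on UNIV f" and ch: "continuous_on UNIV h" by (auto simp: CZ_simps)
  define D where "D = f - h"
  have cD: "continuous_on UNIV D" unfolding D_def fun_diff_def using cf ch by (intro continuous_intros)
  have pD: "\<phi> D = 0" unfolding D_def using ucp_diff[OF u cf ch] fh by simp
  have acX: "\<And>g k. continuous_on UNIV k \<Longrightarrow> continuous_on UNIV (\<alpha>X g k)"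
    using ucp_cont[OF G_space_ucp[OF spX]] by blast
  have eqv: "\<And>g k. continuous_on UNIV k \<Longrightarrow> \<phi> (\<alpha>X g k) = \<alpha>Y g (\<phi> k)"
    using eq by (auto simp: G_equivariant_def CZ_simps)
  have z: "\<And>g. \<alpha>Y g 0 = 0" using ucp_zero[OF G_space_ucp[OF spY]] .
  have "D z0 = 0" for z0
  proof (rule boundary_zero[OF spX bd cD])
    fix \<epsilon> :: real assume "\<epsilon> > 0"
    show "\<exists>\<mu>. is_state \<mu> \<and> (\<forall>g g'. cmod (\<mu> (\<alpha>X g (\<alpha>X g' D))) \<le> \<epsilon>)"
    proof (intro exI conjI allI)
      show "is_state (\<lambda>k. \<phi> k undefined)" by (rule state_of_ucp[OF u])
      fix g g'
      have "\<phi> (\<alpha>X g (\<alpha>X g' D)) = \<alpha>Y g (\<alpha>Y g' (\<phi> D))"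
        using eqv acX cD by simp
      thus "cmod (\<phi> (\<alpha>X g (\<alpha>X g' D)) undefined) \<le> \<epsilon>" using pD z \<open>\<epsilon> > 0\<close> by simp
    qed
  qed
  thus "f = h" unfolding D_def fun_diff_def by (metis eq_iff_diff_eq_0 ext)
qed

lemma rigid_real:
  fixes \<alpha> :: "'g \<Rightarrow> ('x::t2_space \<Rightarrow> complex) \<Rightarrow> ('x \<Rightarrow> complex)"
  assumes sp: "G_space cv e \<alpha>" and bd: "G_boundary \<alpha>" and cpt: "compact (UNIV :: 'x set)"
    and u: "ucp (CZ :: ('x \<Rightarrow> complex) opsys) (CZ :: ('x \<Rightarrow> complex) opsys) \<phi>"
    and eq: "G_equivariant (CZ :: ('x \<Rightarrow> complex) opsys) \<alpha> \<alpha> \<phi>"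
    and cf: "continuous_on UNIV f" and rf: "\<forall>z. Im (f z) = 0"
  shows "\<phi> f = f"
proof -
  have "bounded (range f)" using compact_continuous_image[OF cf cpt] compact_imp_bounded by auto
  then obtain M where M0: "M > 0" and Mb: "\<And>z. cmod (f z) \<le> M" by (auto simp: bounded_pos)
  have fb: "\<forall>z. Im (f z) = 0 \<and> \<bar>Re (f z)\<bar> \<le> M" using rf Mb abs_Re_le_cmod order_trans by blast
  have ua: "\<And>g. ucp (CZ :: ('x \<Rightarrow> complex) opsys) CZ (\<alpha> g)" using G_space_ucp[OF sp] .
  have ac: "\<And>g k. continuous_on UNIV k \<Longrightarrow> continuous_on UNIV (\<alpha> g k)"
    using ucp_cont[OF ua] by blast
  have eqv: "\<And>g k. continuous_on UNIV k \<Longrightarrow> \<phi> (\<alpha> g k) = \<alpha> g (\<phi> k)"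
    using eq by (auto simp: G_equivariant_def CZ_simps)
  have cpf: "continuous_on UNIV (\<phi> f)" using ucp_cont[OF u cf] .
  define D where "D = \<phi> f - f"
  have cD: "continuous_on UNIV D" unfolding D_def fun_diff_def using cf cpf by (intro continuous_intros)
  have key: "\<alpha> g (\<alpha> g' D) = \<phi> (\<alpha> g (\<alpha> g' f)) - \<alpha> g (\<alpha> g' f)" for g g'
  proof -
    have "\<alpha> g' D = \<phi> (\<alpha> g' f) - \<alpha> g' f"
      unfolding D_def using ucp_diff[OF ua cpf cf] eqv[OF cf] by simp
    hence "\<alpha> g (\<alpha> g' D) = \<alpha> g (\<phi> (\<alpha> g' f)) - \<alpha> g (\<alpha> g' f)"
      using ucp_diff[OF ua ucp_cont[OF u ac[OF cf]] ac[OF cf]] by simp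
    thus ?thesis using eqv[OF ac[OF cf]] by simp
  qed
  have "D z0 = 0" for z0
  proof (rule boundary_zero[OF sp bd cD])
    fix \<epsilon> :: real assume \<epsilon>: "\<epsilon> > 0"
    obtain n :: nat where n: "real n > 2 * M / \<epsilon>" using reals_Archimedean2 by blast
    have npos: "n > 0" using n M0 \<epsilon> by (metis divide_pos_pos mult_pos_pos of_nat_0 order_less_asym zero_less_numeral gr0I)
    define \<mu> where "\<mu> = (\<lambda>k. (\<Sum>i<n. (\<phi>^^i) k undefined) / of_nat n)"
    show "\<exists>\<mu>. is_state \<mu> \<and> (\<forall>g g'. cmod (\<mu> (\<alpha> g (\<alpha> g' D))) \<le> \<epsilon>)"
    proof (intro exI conjI allI)
      show "is_state \<mu>" unfolding \<mu>_def by (rule cesaro_state[OF u npos])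
      fix g g'
      define a where "a = \<alpha> g (\<alpha> g' f)"
      have ca: "continuous_on UNIV a" unfolding a_def using ac[OF ac[OF cf]] .
      have ab: "\<forall>z. Im (a z) = 0 \<and> \<bar>Re (a z)\<bar> \<le> M"
      proof -
        have "\<forall>z. Im (\<alpha> g' f z) = 0 \<and> \<bar>Re (\<alpha> g' f z)\<bar> \<le> M"
          using ucp_bound[OF ua cf fb] by blast
        thus ?thesis unfolding a_def using ucp_bound[OF ua ac[OF cf]] by blast
      qed
      have "\<mu> (\<alpha> g (\<alpha> g' D)) = ((\<phi>^^n) a undefined - a undefined) / of_nat n"
        unfolding \<mu>_def key a_def[symmetric] using cesaro_tele[OF u ca] by simp
      moreover have b1: "Im ((\<phi>^^n) a undefined) = 0 \<and> \<bar>Re ((\<phi>^^n) a undefined)\<bar> \<le> M"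
        using ucp_bound[OF ucp_funpow[OF u] ca ab] .
      moreover have "cmod ((\<phi>^^n) a undefined - a undefined) \<le> 2 * M"
      proof -
        have "cmod ((\<phi>^^n) a undefined - a undefined) \<le> \<bar>Re ((\<phi>^^n) a undefined - a undefined)\<bar> + \<bar>Im ((\<phi>^^n) a undefined - a undefined)\<bar>"
          by (rule cmod_le)
        moreover have "\<bar>Re (a undefined)\<bar> \<le> M" "Im (a undefined) = 0" using ab by auto
        ultimately show ?thesis using b1 by (simp add: abs_le_iff) linarith
      qed
      ultimately have "cmod (\<mu> (\<alpha> g (\<alpha> g' D))) \<le> 2 * M / real n"
        by (simp add: norm_divide divide_right_mono)
      also have "\<dots> \<le> \<epsilon>" using n npos \<epsilon> by (simp add: divide_le_eq mult.commute less_imp_le pos_divide_less_eq)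
      finally show "cmod (\<mu> (\<alpha> g (\<alpha> g' D))) \<le> \<epsilon>" .
    qed
  qed
  thus ?thesis unfolding D_def fun_diff_def by (metis eq_iff_diff_eq_0 ext)
qed



lemma rigid:
  fixes \<alpha> :: "'g \<Rightarrow> ('x::t2_space \<Rightarrow> complex) \<Rightarrow> ('x \<Rightarrow> complex)"
  assumes sp: "G_space cv e \<alpha>" and bd: "G_boundary \<alpha>" and cpt: "compact (UNIV :: 'x set)"
  shows "G_rigid \<alpha>"
  unfolding G_rigid_def
proof (intro allI impI ballI)
  fix \<phi> :: "('x \<Rightarrow> complex) \<Rightarrow> ('x \<Rightarrow> complex)" and f
  assume "ucp CZ CZ \<phi> \<and> G_equivariant CZ \<alpha> \<alpha> \<phi>" and "f \<in> os_carrier (CZ::('x \<Rightarrow> complex) opsys)"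
  hence u: "ucp CZ CZ \<phi>" and eq: "G_equivariant CZ \<alpha> \<alpha> \<phi>" and cf: "continuous_on UNIV f"
    by (auto simp: CZ_simps)
  define fr where "fr = (\<lambda>z. complex_of_real (Re (f z)))"
  define fi where "fi = (\<lambda>z. complex_of_real (Im (f z)))"
  have cr: "continuous_on UNIV fr" unfolding fr_def using cf by (intro continuous_intros)
  have ci: "continuous_on UNIV fi" unfolding fi_def using cf by (intro continuous_intros)
  have r1: "\<phi> fr = fr" by (rule rigid_real[OF sp bd cpt u eq cr]) (simp add: fr_def)
  have r2: "\<phi> fi = fi" by (rule rigid_real[OF sp bd cpt u eq ci]) (simp add: fi_def)
  have ci': "continuous_on UNIV (\<lambda>z. \<i> * fi z)" using ci by (intro continuous_intros)
  have fe: "f = fr + (\<lambda>z. \<i> * fi z)"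
    by (rule ext) (simp add: fr_def fi_def complex_eq_iff)
  have "\<phi> f = \<phi> fr + \<phi> (\<lambda>z. \<i> * fi z)" by (subst fe, rule ucp_add[OF u cr ci'])
  also have "\<dots> = fr + (\<lambda>z. \<i> * fi z)" using ucp_smult[OF u ci] r1 r2 by simp
  finally show "\<phi> f = f" using fe by simp
qed


theorem theorem4p9:
  fixes cv :: "'g \<Rightarrow> 'g \<Rightarrow> 'g pmf" and e :: 'g and iv :: "'g \<Rightarrow> 'g"
    and \<alpha>X :: "'g \<Rightarrow> ('x::t2_space \<Rightarrow> complex) \<Rightarrow> ('x \<Rightarrow> complex)"
    and \<alpha>Y :: "'g \<Rightarrow> ('y::t2_space \<Rightarrow> complex) \<Rightarrow> ('y \<Rightarrow> complex)"
  assumes "hypergroup cv e iv"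
    and "compact (UNIV :: 'x set)" and "compact (UNIV :: 'y set)"
    and "G_space cv e \<alpha>X" and "G_space cv e \<alpha>Y"
    and "G_boundary \<alpha>X" and "G_minimal \<alpha>Y"
  shows "(\<forall>\<phi>. ucp (CZ :: ('x \<Rightarrow> complex) opsys) (CZ :: ('y \<Rightarrow> complex) opsys) \<phi>
               \<and> G_equivariant (CZ :: ('x \<Rightarrow> complex) opsys) \<alpha>X \<alpha>Y \<phi>
            \<longrightarrow> inj_on \<phi> (os_carrier (CZ :: ('x \<Rightarrow> complex) opsys)))
       \<and> (G_injective cv e \<alpha>X TYPE('g \<Rightarrow> 'x \<Rightarrow> complex) \<longrightarrow> G_rigid \<alpha>X)"
proof (intro conjI allI impI)
  fix \<phi> assume "ucp (CZ :: ('x \<Rightarrow> complex) opsys) (CZ :: ('y \<Rightarrow> complex) opsys) \<phi>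
               \<and> G_equivariant (CZ :: ('x \<Rightarrow> complex) opsys) \<alpha>X \<alpha>Y \<phi>"
  thus "inj_on \<phi> (os_carrier (CZ :: ('x \<Rightarrow> complex) opsys))"
    using part1[OF assms(4) assms(5) assms(6)] by blast
next
  show "G_rigid \<alpha>X" by (rule rigid[OF assms(4) assms(6) assms(2)])
qed

end
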